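(* Let $A$ be a row-finite $\omega\times\omega$ complex matrix with finite deficiency, and let $H=(h_{ij})=QA$ be a quasi-Hermite form of $A$ ($Q$ nonsingular row-finite). Let $j_0<j_1<\cdots$ be the indices of the nonzero rows of $H$ and $\mu_n=\ell(H_{j_n})$, and let $S=\omega\setminus\{\mu_0,\mu_1,\dots\}$ (the inaccessible row-lengths). For $s\in S$ define $\xi^{(s)}\in\mathbb{C}^\omega$ by $\xi^{(s)}_s=1$, $\xi^{(s)}_{\mu_n}=-h_{j_n s}$ for all $n$, and $\xi^{(s)}_t=0$ for $t\in S\setminus\{s\}$. Then $\{\xi^{(s)}\}_{s\in S}$ is a finite basis of the solution space $RNS(A)=\{y\in\mathbb{C}^\omega: Ay=0\}$; every $x\in RNS(A)$ equals $\sum_{s\in S}x_s\xi^{(s)}$, and $\dim RNS(A)=\operatorname{def}(A)$.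
   Context: $\omega=\{0,1,2,\dots\}$; $\mathbb{C}^\omega$ is the space of all complex sequences; $(Ay)_n=\sum_k a_{nk}y_k$. Row-finite: finitely many nonzero entries per row; nonsingular: invertible in the algebra of row-finite matrices. Length $\ell(x)$ of a finitely supported $x\neq0$: largest index of a nonzero coordinate. Quasi-Hermite form: with $J$ the indices of nonzero rows and $\ell_j=\ell(H_j)$, (i) $j<j'$ in $J$ implies $\ell_j<\ell_{j'}$; (ii) $h_{j\ell_j}=1$; (iii) $h_{m\ell_j}=0$ for all $m\neq j$. $\operatorname{def}(A)$ is the codimension of the row space of $A$ in the space of finitely supported sequences; it equals $\operatorname{card}(S)$. *)

theory Defs
  imports Complex_Main "HOL-Library.Function_Algebras"
begin

definition cscale :: "complex \<Rightarrow> (nat \<Rightarrow> complex) \<Rightarrow> (nat \<Rightarrow> complex)" where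
  "cscale c f = (\<lambda>t. c * f t)"

abbreviation cspan :: "(nat \<Rightarrow> complex) set \<Rightarrow> (nat \<Rightarrow> complex) set" where
  "cspan \<equiv> module.span cscale"

abbreviation cindependent :: "(nat \<Rightarrow> complex) set \<Rightarrow> bool" where
  "cindependent S \<equiv> \<not> module.dependent cscale S"

abbreviation cdim :: "(nat \<Rightarrow> complex) set \<Rightarrow> nat" where
  "cdim \<equiv> vector_space.dim cscale"

definition fin_supp :: "(nat \<Rightarrow> complex) \<Rightarrow> bool" where
  "fin_supp x \<longleftrightarrow> finite {k. x k \<noteq> 0}"

definition FS :: "(nat \<Rightarrow> complex) set" where
  "FS = {x. fin_supp x}"

definition row_finite :: "(nat \<Rightarrow> nat \<Rightarrow> complex) \<Rightarrow> bool" where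
  "row_finite A \<longleftrightarrow> (\<forall>n. finite {k. A n k \<noteq> 0})"

definition mmult :: "(nat \<Rightarrow> nat \<Rightarrow> complex) \<Rightarrow> (nat \<Rightarrow> nat \<Rightarrow> complex) \<Rightarrow> (nat \<Rightarrow> nat \<Rightarrow> complex)" where
  "mmult P Q = (\<lambda>i k. \<Sum>j\<in>{j. P i j \<noteq> 0}. P i j * Q j k)"

definition mvec :: "(nat \<Rightarrow> nat \<Rightarrow> complex) \<Rightarrow> (nat \<Rightarrow> complex) \<Rightarrow> (nat \<Rightarrow> complex)" where
  "mvec A y = (\<lambda>n. \<Sum>k\<in>{k. A n k \<noteq> 0}. A n k * y k)"

definition idm :: "nat \<Rightarrow> nat \<Rightarrow> complex" where
  "idm = (\<lambda>i k. if i = k then 1 else 0)"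

definition nonsingular :: "(nat \<Rightarrow> nat \<Rightarrow> complex) \<Rightarrow> bool" where
  "nonsingular Q \<longleftrightarrow> row_finite Q \<and>
     (\<exists>P. row_finite P \<and> mmult P Q = idm \<and> mmult Q P = idm)"

definition len :: "(nat \<Rightarrow> complex) \<Rightarrow> nat" where
  "len x = Max {k. x k \<noteq> 0}"

definition nonzero_rows :: "(nat \<Rightarrow> nat \<Rightarrow> complex) \<Rightarrow> nat set" where
  "nonzero_rows H = {j. H j \<noteq> (\<lambda>_. 0)}"

definition quasi_hermite :: "(nat \<Rightarrow> nat \<Rightarrow> complex) \<Rightarrow> bool" where
  "quasi_hermite H \<longleftrightarrow> row_finite H \<and>
     (\<forall>j\<in>nonzero_rows H. \<forall>j'\<in>nonzero_rows H. j < j' \<longrightarrow> len (H j) < len (H j')) \<and>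
     (\<forall>j\<in>nonzero_rows H. H j (len (H j)) = 1) \<and>
     (\<forall>j\<in>nonzero_rows H. \<forall>m. m \<noteq> j \<longrightarrow> H m (len (H j)) = 0)"

definition row_space :: "(nat \<Rightarrow> nat \<Rightarrow> complex) \<Rightarrow> (nat \<Rightarrow> complex) set" where
  "row_space A = cspan (range A)"

text \<open>Codimension of the row space in FS: the least number of finitely supported sequences
  which, added to the row space, span FS.  Finite deficiency: such a finite set exists.\<close>
definition finite_deficiency :: "(nat \<Rightarrow> nat \<Rightarrow> complex) \<Rightarrow> bool" where
  "finite_deficiency A \<longleftrightarrow>
     (\<exists>B. finite B \<and> B \<subseteq> FS \<and> cspan (row_space A \<union> B) = FS)"

definition deficiency :: "(nat \<Rightarrow> nat \<Rightarrow> complex) \<Rightarrow> nat" where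
  "deficiency A = (LEAST n. \<exists>B. finite B \<and> card B = n \<and> B \<subseteq> FS \<and> cspan (row_space A \<union> B) = FS)"

definition RNS :: "(nat \<Rightarrow> nat \<Rightarrow> complex) \<Rightarrow> (nat \<Rightarrow> complex) set" where
  "RNS A = {y. mvec A y = (\<lambda>_. 0)}"

end

theory Submission
  imports Defs
begin

lemma cscale_apply: "cscale c f t = c * f t" by (simp add: cscale_def)

interpretation cvs: vector_space cscale
  by unfold_locales (auto simp: cscale_def fun_eq_iff algebra_simps)

lemma sum_fun_apply: "(\<Sum>i\<in>I. f i) t = (\<Sum>i\<in>I. f i t)"
  by (induction I rule: infinite_finite_induct) auto

lemma sum_supp_superset:
  fixes f y :: "nat \<Rightarrow> complex"
  assumes "finite K" "{k. f k \<noteq> 0} \<subseteq> K"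
  shows "(\<Sum>k\<in>{k. f k \<noteq> 0}. f k * y k) = (\<Sum>k\<in>K. f k * y k)"
  by (rule sum.mono_neutral_left) (use assms in \<open>auto\<close>)

lemma sum_delta_mult: "finite T \<Longrightarrow> (\<Sum>s\<in>T. c s * (if t = s then 1 else 0)) = (if t \<in> T then (c t::complex) else 0)"
proof -
  assume "finite T"
  have "(\<Sum>s\<in>T. c s * (if t = s then 1 else 0)) = (\<Sum>s\<in>T. if t = s then c s else 0)"
    by (rule sum.cong) auto
  then show ?thesis using \<open>finite T\<close> by (simp add: sum.delta)
qed

lemma mvec_mmult:
  assumes "row_finite P" "row_finite Q"
  shows "mvec (mmult P Q) x = mvec P (mvec Q x)"
proof
  fix n
  let ?J = "{j. P n j \<noteq> 0}"
  let ?K = "\<Union>j\<in>?J. {k. Q j k \<noteq> 0}"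
  have fJ: "finite ?J" using assms(1) unfolding row_finite_def by auto
  have fK: "finite ?K" using fJ assms(2) unfolding row_finite_def by auto
  have sub: "{k. mmult P Q n k \<noteq> 0} \<subseteq> ?K"
  proof
    fix k assume "k \<in> {k. mmult P Q n k \<noteq> 0}"
    then have "(\<Sum>j\<in>?J. P n j * Q j k) \<noteq> 0" by (simp add: mmult_def)
    then obtain j where "j \<in> ?J" "P n j * Q j k \<noteq> 0"
      by (meson sum.not_neutral_contains_not_neutral)
    then show "k \<in> ?K" by auto
  qed
  have "mvec (mmult P Q) x n = (\<Sum>k\<in>?K. mmult P Q n k * x k)"
    unfolding mvec_def by (rule sum_supp_superset[OF fK sub])
  also have "\<dots> = (\<Sum>k\<in>?K. \<Sum>j\<in>?J. P n j * (Q j k * x k))"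
    by (simp add: mmult_def sum_distrib_right mult.assoc)
  also have "\<dots> = (\<Sum>j\<in>?J. P n j * (\<Sum>k\<in>?K. Q j k * x k))"
    by (subst sum.swap) (simp add: sum_distrib_left)
  also have "\<dots> = (\<Sum>j\<in>?J. P n j * mvec Q x j)"
  proof (rule sum.cong[OF refl])
    fix j assume "j \<in> ?J"
    then have "{k. Q j k \<noteq> 0} \<subseteq> ?K" by auto
    then have "(\<Sum>k\<in>{k. Q j k \<noteq> 0}. Q j k * x k) = (\<Sum>k\<in>?K. Q j k * x k)"
      by (rule sum_supp_superset[OF fK])
    then show "P n j * (\<Sum>k\<in>?K. Q j k * x k) = P n j * mvec Q x j"
      unfolding mvec_def by simp
  qed
  also have "\<dots> = mvec P (mvec Q x) n" by (simp add: mvec_def)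
  finally show "mvec (mmult P Q) x n = mvec P (mvec Q x) n" .
qed

lemma mmult_idm: "mmult idm A = A"
proof -
  have "\<And>i. {j. idm i j \<noteq> 0} = {i}" by (auto simp: idm_def)
  then show ?thesis by (simp add: mmult_def idm_def fun_eq_iff)
qed

lemma row_finite_idm: "row_finite idm"
proof -
  have "\<And>i. {j. idm i j \<noteq> 0} = {i}" by (auto simp: idm_def)
  then show ?thesis by (simp add: row_finite_def)
qed

lemma mvec_zero: "mvec M (\<lambda>_. 0) = (\<lambda>_. 0)" by (simp add: mvec_def)

lemma delta_indep:
  assumes "finite T" "\<And>s t. s \<in> T \<Longrightarrow> t \<in> T \<Longrightarrow> v s t = (if s = t then 1 else 0)"
  shows "inj_on v T \<and> cindependent (v ` T)"
proof
  show inj: "inj_on v T"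
  proof (rule inj_onI)
    fix s s' assume "s \<in> T" "s' \<in> T" "v s = v s'"
    then have "v s s = v s' s" by simp
    with assms(2)[OF \<open>s \<in> T\<close> \<open>s \<in> T\<close>] assms(2)[OF \<open>s' \<in> T\<close> \<open>s \<in> T\<close>]
    show "s = s'" by (auto split: if_splits)
  qed
  show "cindependent (v ` T)"
  proof (rule cvs.independent_if_scalars_zero)
    show "finite (v ` T)" using assms(1) by simp
    fix f x assume 0: "(\<Sum>x\<in>v ` T. cscale (f x) x) = 0" and x: "x \<in> v ` T"
    then obtain s where s: "s \<in> T" "x = v s" by auto
    have "0 = (\<Sum>x\<in>v ` T. cscale (f x) x) s" using 0 by simp
    also have "\<dots> = (\<Sum>t\<in>T. f (v t) * v t s)"
      by (simp add: sum_fun_apply sum.reindex[OF inj] cscale_apply)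
    also have "\<dots> = (\<Sum>t\<in>T. f (v t) * (if s = t then 1 else 0))"
      by (rule sum.cong[OF refl]) (use assms(2) s in \<open>auto\<close>)
    also have "\<dots> = f (v s)" using assms(1) s by (simp add: sum_delta_mult)
    finally show "f x = 0" using s by simp
  qed
qed


lemma cscale_zero[simp]: "cscale c 0 = 0" by (simp add: cscale_def fun_eq_iff)

lemma fs_zero: "fin_supp 0" by (simp add: fin_supp_def)

lemma fs_add: "fin_supp x \<Longrightarrow> fin_supp y \<Longrightarrow> fin_supp (x + y)"
proof -
  assume a: "fin_supp x" "fin_supp y"
  have "{k. (x + y) k \<noteq> 0} \<subseteq> {k. x k \<noteq> 0} \<union> {k. y k \<noteq> 0}" by auto
  then show ?thesis using a unfolding fin_supp_def by (auto intro: finite_subset)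
qed

lemma fs_scale: "fin_supp x \<Longrightarrow> fin_supp (cscale c x)"
proof -
  assume a: "fin_supp x"
  have "{k. cscale c x k \<noteq> 0} \<subseteq> {k. x k \<noteq> 0}" by (auto simp: cscale_apply)
  then show ?thesis using a unfolding fin_supp_def by (auto intro: finite_subset)
qed

lemma fs_lin: "fin_supp x \<Longrightarrow> fin_supp y \<Longrightarrow> fin_supp (cscale c x + y)"
  by (intro fs_add fs_scale)

lemma subspace_FS: "cvs.subspace FS"
  unfolding cvs.subspace_def FS_def using fs_zero fs_add fs_scale by auto

lemma mvec_add: "mvec A (x + y) = mvec A x + mvec A y"
  by (simp add: mvec_def fun_eq_iff distrib_left sum.distrib)

lemma mvec_scale: "mvec A (cscale c x) = cscale c (mvec A x)"
  by (simp add: mvec_def fun_eq_iff cscale_apply sum_distrib_left mult.left_commute)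

lemma subspace_RNS: "cvs.subspace (RNS A)"
  unfolding cvs.subspace_def RNS_def
proof (intro conjI ballI allI)
  show "0 \<in> {y. mvec A y = (\<lambda>_. 0)}" by (simp add: mvec_def)
  fix x y c assume x: "x \<in> {y. mvec A y = (\<lambda>_. 0)}" and y: "y \<in> {y. mvec A y = (\<lambda>_. 0)}"
  then show "x + y \<in> {y. mvec A y = (\<lambda>_. 0)}" by (simp add: mvec_add fun_eq_iff)
next
  fix x c assume x: "x \<in> {y. mvec A y = (\<lambda>_. 0)}"
  then show "cscale c x \<in> {y. mvec A y = (\<lambda>_. 0)}" using mvec_scale[of A c x] by (simp add: cscale_def)
qed

theorem theorem5:
  fixes A Q H :: "nat \<Rightarrow> nat \<Rightarrow> complex"
    and S :: "nat set"
    and \<xi> :: "nat \<Rightarrow> nat \<Rightarrow> complex"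
  assumes "row_finite A"
    and "finite_deficiency A"
    and "nonsingular Q"
    and "H = mmult Q A"
    and "quasi_hermite H"
    and "S = UNIV - (\<lambda>j. len (H j)) ` nonzero_rows H"
    and "\<And>s. s \<in> S \<Longrightarrow> \<xi> s s = 1"
    and "\<And>s j. s \<in> S \<Longrightarrow> j \<in> nonzero_rows H \<Longrightarrow> \<xi> s (len (H j)) = - H j s"
    and "\<And>s t. s \<in> S \<Longrightarrow> t \<in> S \<Longrightarrow> t \<noteq> s \<Longrightarrow> \<xi> s t = 0"
  shows "finite S
    \<and> inj_on \<xi> S
    \<and> \<xi> ` S \<subseteq> RNS A
    \<and> cindependent (\<xi> ` S)
    \<and> cspan (\<xi> ` S) = RNS A
    \<and> (\<forall>x\<in>RNS A. x = (\<lambda>t. \<Sum>s\<in>S. x s * \<xi> s t))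
    \<and> cdim (RNS A) = deficiency A
    \<and> deficiency A = card S"
proof -
  define N where "N = nonzero_rows H"
  have qh: "quasi_hermite H" by fact
  have a8: "\<And>s j. s \<in> S \<Longrightarrow> j \<in> N \<Longrightarrow> \<xi> s (len (H j)) = - H j s"
    using assms(8) N_def by blast
  have rfH: "row_finite H" using qh unfolding quasi_hermite_def by blast
  have finH: "\<And>j. finite {k. H j k \<noteq> 0}" using rfH unfolding row_finite_def by blast
  have one: "\<And>j. j \<in> N \<Longrightarrow> H j (len (H j)) = 1"
    using qh unfolding quasi_hermite_def N_def by blast
  have zcol: "\<And>j m. j \<in> N \<Longrightarrow> m \<noteq> j \<Longrightarrow> H m (len (H j)) = 0"
    using qh unfolding quasi_hermite_def N_def by blast
  have Sdef: "S = UNIV - (\<lambda>j. len (H j)) ` N" using assms(6) N_def by simp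
  have zrow: "\<And>j k. j \<notin> N \<Longrightarrow> H j k = 0"
    unfolding N_def nonzero_rows_def by (auto simp: fun_eq_iff)
  have lenS: "\<And>j. j \<in> N \<Longrightarrow> len (H j) \<notin> S" using Sdef by auto
  have notS: "\<And>t. t \<notin> S \<Longrightarrow> \<exists>j\<in>N. t = len (H j)" using Sdef by auto
  have inS: "k \<in> S" if j: "j \<in> N" "H j k \<noteq> 0" "k \<noteq> len (H j)" for j k
  proof (rule ccontr)
    assume "k \<notin> S"
    then obtain j' where j': "j' \<in> N" "k = len (H j')" using Sdef by auto
    then have "j' \<noteq> j" using j by auto
    then have "H j k = 0" using zcol[OF j'(1)] j'(2) by auto
    with j show False by simp
  qed
  have mvecH: "mvec H x j = x (len (H j)) + (\<Sum>k\<in>T. H j k * x k)"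
    if j: "j \<in> N" and T: "finite T" "T \<subseteq> S" "{k. H j k \<noteq> 0} - {len (H j)} \<subseteq> T" for x j T
  proof -
    have nT: "len (H j) \<notin> T" using T(2) lenS[OF j] by auto
    have "mvec H x j = (\<Sum>k\<in>insert (len (H j)) T. H j k * x k)"
      unfolding mvec_def by (rule sum_supp_superset) (use T in auto)
    also have "\<dots> = x (len (H j)) + (\<Sum>k\<in>T. H j k * x k)"
      using T(1) nT one[OF j] by simp
    finally show ?thesis .
  qed
  have mvecH0: "mvec H x j = 0" if "j \<notin> N" for x j
    using zrow[OF that] by (simp add: mvec_def)
  have xiH: "mvec H (\<xi> s) = (\<lambda>_. 0)" if s: "s \<in> S" for s
  proof
    fix j show "mvec H (\<xi> s) j = 0"
    proof (cases "j \<in> N")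
      case False then show ?thesis by (rule mvecH0)
    next
      case True
      let ?T = "insert s ({k. H j k \<noteq> 0} - {len (H j)})"
      have T: "finite ?T" "?T \<subseteq> S" "{k. H j k \<noteq> 0} - {len (H j)} \<subseteq> ?T"
        using finH[of j] s inS[OF True] by auto
      have "(\<Sum>k\<in>?T. H j k * \<xi> s k) = H j s * \<xi> s s + (\<Sum>k\<in>?T - {s}. H j k * \<xi> s k)"
        using T(1) by (rule sum.remove) simp
      also have "(\<Sum>k\<in>?T - {s}. H j k * \<xi> s k) = 0"
        by (rule sum.neutral) (use T(2) assms(9)[OF s] in auto)
      finally show ?thesis
        using mvecH[OF True T, of "\<xi> s"] assms(7)[OF s] a8[OF s True] by simp
    qed
  qed
  obtain P where rfQ: "row_finite Q" and rfP: "row_finite P" and PQ: "mmult P Q = idm"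
    using assms(3) unfolding nonsingular_def by blast
  have HA: "mvec H y = mvec Q (mvec A y)" for y
    using mvec_mmult[OF rfQ assms(1)] assms(4) by simp
  have AH: "mvec A y = mvec P (mvec H y)" for y
  proof -
    have "mvec A y = mvec (mmult (mmult P Q) A) y" by (simp add: PQ mmult_idm)
    also have "\<dots> = mvec (mmult P Q) (mvec A y)"
      by (rule mvec_mmult) (simp_all add: PQ row_finite_idm assms(1))
    also have "\<dots> = mvec P (mvec Q (mvec A y))" by (rule mvec_mmult[OF rfP rfQ])
    also have "\<dots> = mvec P (mvec H y)" by (simp add: HA)
    finally show ?thesis .
  qed
  have RNS_iff: "y \<in> RNS A \<longleftrightarrow> mvec H y = (\<lambda>_. 0)" for y
  proof
    assume "y \<in> RNS A" then show "mvec H y = (\<lambda>_. 0)" by (simp add: RNS_def HA mvec_zero)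
  next
    assume "mvec H y = (\<lambda>_. 0)" then show "y \<in> RNS A" by (simp add: RNS_def AH mvec_zero)
  qed
  have xiA: "\<xi> s \<in> RNS A" if "s \<in> S" for s using RNS_iff xiH[OF that] by simp
  have fsA: "fin_supp (A i)" for i using assms(1) by (simp add: row_finite_def fin_supp_def)

  define F where "F x = (\<lambda>s. if s \<in> S then (\<Sum>k\<in>{k. x k \<noteq> 0}. x k * \<xi> s k) else 0)" for x
  have Flin: "F (cscale c x + y) = cscale c (F x) + F y" if xy: "fin_supp x" "fin_supp y" for c x y
  proof -
    let ?K = "{k. x k \<noteq> 0} \<union> {k. y k \<noteq> 0}"
    have fK: "finite ?K" using xy by (simp add: fin_supp_def)
    have Fk: "F z s = (\<Sum>k\<in>?K. z k * \<xi> s k)" if "s \<in> S" "{k. z k \<noteq> 0} \<subseteq> ?K" for z s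
      unfolding F_def using sum_supp_superset[OF fK that(2)] that(1) by simp
    show ?thesis
    proof
      fix s
      show "F (cscale c x + y) s = (cscale c (F x) + F y) s"
      proof (cases "s \<in> S")
        case False then show ?thesis by (simp add: F_def cscale_apply)
      next
        case True
        have e1: "F (cscale c x + y) s = (\<Sum>k\<in>?K. (cscale c x + y) k * \<xi> s k)"
          by (rule Fk[OF True]) (auto simp: cscale_apply)
        have e2: "F x s = (\<Sum>k\<in>?K. x k * \<xi> s k)" by (rule Fk[OF True]) auto
        have e3: "F y s = (\<Sum>k\<in>?K. y k * \<xi> s k)" by (rule Fk[OF True]) auto
        show ?thesis using e1 e2 e3
          by (simp add: sum.distrib sum_distrib_left distrib_right mult.assoc cscale_apply)
      qed
    qed
  qed
  have F0: "F 0 = 0" by (simp add: F_def fun_eq_iff)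
  have FA: "F (A i) = 0" for i
  proof
    fix s show "F (A i) s = 0 s"
    proof (cases "s \<in> S")
      case True
      have "mvec A (\<xi> s) i = 0" using xiA[OF True] by (simp add: RNS_def)
      then show ?thesis using True by (simp add: F_def mvec_def)
    qed (simp add: F_def)
  qed
  have spanA: "fin_supp x \<and> F x = 0" if "x \<in> cspan (range A)" for x
    using that
  proof (induction rule: cvs.span_induct_alt)
    case base show ?case by (simp only: F0) (intro conjI fs_zero refl)
  next
    case (step c x y)
    then obtain i where xi: "x = A i" by auto
    have y: "fin_supp y" "F y = 0" using step by (auto simp: zero_fun_def)
    have 1: "F (cscale c (A i) + y) = 0" using Flin[OF fsA y(1), of c] FA y(2) by simp
    have 2: "fin_supp (cscale c (A i) + y)" using fs_lin[OF fsA y(1)] by blast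
    show ?case using 1 2 xi by blast
  qed
  have spanRB: "fin_supp x \<and> F x \<in> cspan (F ` B)"
    if B: "B \<subseteq> FS" and x: "x \<in> cspan (row_space A \<union> B)" for x B
    using x
  proof (induction rule: cvs.span_induct_alt)
    case base show ?case by (simp only: F0) (intro conjI fs_zero cvs.span_zero)
  next
    case (step c x y)
    show ?case
    proof (cases "x \<in> row_space A")
      case True
      then have x: "fin_supp x" "F x = 0" using spanA unfolding row_space_def by auto
      have y: "fin_supp y" "F y \<in> cspan (F ` B)" using step by auto
      have 1: "F (cscale c x + y) \<in> cspan (F ` B)" using Flin[OF x(1) y(1), of c] x(2) y(2) by simp
      have 2: "fin_supp (cscale c x + y)" using fs_lin[OF x(1) y(1)] by blast
      show ?thesis using 1 2 by blast
    next
      case False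
      then have "x \<in> B" using step by auto
      then have x: "fin_supp x" "F x \<in> cspan (F ` B)" using B by (auto simp: FS_def intro: cvs.span_base)
      have y: "fin_supp y" "F y \<in> cspan (F ` B)" using step by auto
      have 1: "F (cscale c x + y) \<in> cspan (F ` B)" unfolding Flin[OF x(1) y(1), of c]
        by (intro cvs.span_add cvs.span_scale x(2) y(2))
      have 2: "fin_supp (cscale c x + y)" using fs_lin[OF x(1) y(1)] by blast
      show ?thesis using 1 2 by blast
    qed
  qed
  define e where "e k = (\<lambda>t::nat. if t = k then (1::complex) else 0)" for k :: nat
  have suppe: "{t. e k t \<noteq> 0} = {k}" for k by (auto simp: e_def)
  have fse: "fin_supp (e k)" for k by (simp add: fin_supp_def suppe)
  have Fe: "F (e s) t = (if s = t then 1 else 0)" if "s \<in> S" "t \<in> S" for s t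
    using that assms(7) assms(9)[of t s] by (auto simp: F_def suppe e_def)
  have bound: "card S' \<le> card B"
    if S': "finite S'" "S' \<subseteq> S" and B: "finite B" "B \<subseteq> FS" "cspan (row_space A \<union> B) = FS" for S' B
  proof -
    have di: "inj_on (\<lambda>s. F (e s)) S' \<and> cindependent ((\<lambda>s. F (e s)) ` S')"
      by (rule delta_indep[OF S'(1)]) (simp add: Fe subsetD[OF S'(2)])
    have sub: "(\<lambda>s. F (e s)) ` S' \<subseteq> cspan (F ` B)"
    proof
      fix z assume "z \<in> (\<lambda>s. F (e s)) ` S'"
      then obtain s where "z = F (e s)" by auto
      moreover have "e s \<in> cspan (row_space A \<union> B)" using B(3) fse by (simp add: FS_def)
      ultimately show "z \<in> cspan (F ` B)" using spanRB[OF B(2)] by blast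
    qed
    have "card ((\<lambda>s. F (e s)) ` S') \<le> card (F ` B)"
      using cvs.independent_span_bound[OF _ conjunct2[OF di] sub] B(1) by simp
    also have "\<dots> \<le> card B" using B(1) by (rule card_image_le)
    finally show ?thesis using card_image[OF conjunct1[OF di]] by simp
  qed
  obtain B0 where B0: "finite B0" "B0 \<subseteq> FS" "cspan (row_space A \<union> B0) = FS"
    using assms(2) unfolding finite_deficiency_def by blast
  have finS: "finite S"
  proof (rule ccontr)
    assume "infinite S"
    then obtain S' where S': "finite S'" "card S' = Suc (card B0)" "S' \<subseteq> S"
      using infinite_arbitrarily_large by blast
    have "card S' \<le> card B0" by (rule bound[OF S'(1) S'(3) B0])
    with S'(2) show False by simp
  qed
  have expand: "x = (\<lambda>t. \<Sum>s\<in>S. x s * \<xi> s t)" if x: "x \<in> RNS A" for x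
  proof
    fix t
    show "x t = (\<Sum>s\<in>S. x s * \<xi> s t)"
    proof (cases "t \<in> S")
      case True
      have "(\<Sum>s\<in>S. x s * \<xi> s t) = x t * \<xi> t t + (\<Sum>s\<in>S - {t}. x s * \<xi> s t)"
        by (rule sum.remove[OF finS True])
      also have "(\<Sum>s\<in>S - {t}. x s * \<xi> s t) = 0"
        by (rule sum.neutral) (use assms(9) True in auto)
      finally show ?thesis using assms(7)[OF True] by simp
    next
      case False
      then obtain j where j: "j \<in> N" "t = len (H j)" using notS by blast
      have T: "finite S" "S \<subseteq> S" "{k. H j k \<noteq> 0} - {len (H j)} \<subseteq> S"
        using finS inS[OF j(1)] by auto
      have "mvec H x j = 0" using x RNS_iff by (simp add: fun_eq_iff)
      then have "x t + (\<Sum>k\<in>S. H j k * x k) = 0" using mvecH[OF j(1) T] j(2) by simp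
      then have 1: "x t = - (\<Sum>k\<in>S. H j k * x k)" by (simp add: eq_neg_iff_add_eq_0)
      have "(\<Sum>s\<in>S. x s * \<xi> s t) = - (\<Sum>k\<in>S. H j k * x k)"
        using a8 j by (simp add: sum_negf[symmetric] mult.commute)
      with 1 show ?thesis by simp
    qed
  qed
  have xidi: "inj_on \<xi> S \<and> cindependent (\<xi> ` S)"
    by (rule delta_indep[OF finS]) (use assms(7) assms(9) in auto)
  have subRNS: "cvs.subspace (RNS A)" by (rule subspace_RNS)
  have spanxi: "cspan (\<xi> ` S) = RNS A"
  proof
    show "cspan (\<xi> ` S) \<subseteq> RNS A" using xiA by (intro cvs.span_minimal subRNS) auto
    show "RNS A \<subseteq> cspan (\<xi> ` S)"
    proof
      fix x assume x: "x \<in> RNS A"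
      have "(\<Sum>s\<in>S. cscale (x s) (\<xi> s)) = (\<lambda>t. \<Sum>s\<in>S. x s * \<xi> s t)"
        by (simp add: fun_eq_iff sum_fun_apply cscale_apply)
      also have "\<dots> = x" by (rule expand[OF x, symmetric])
      finally have xs: "x = (\<Sum>s\<in>S. cscale (x s) (\<xi> s))" by simp
      have "(\<Sum>s\<in>S. cscale (x s) (\<xi> s)) \<in> cspan (\<xi> ` S)"
        by (intro cvs.span_sum cvs.span_scale cvs.span_base) auto
      with xs show "x \<in> cspan (\<xi> ` S)" by simp
    qed
  qed
  have dimeq: "cdim (RNS A) = card S"
    using cvs.dim_span_eq_card_independent[OF conjunct2[OF xidi]] spanxi
      card_image[OF conjunct1[OF xidi]] by simp
  have Sspan: "cspan (row_space A \<union> e ` S) = FS"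
  proof
    have subFS: "cvs.subspace FS" by (rule subspace_FS)
    have rsFS: "row_space A \<subseteq> FS" unfolding row_space_def using fsA
      by (intro cvs.span_minimal subFS) (auto simp: FS_def)
    show "cspan (row_space A \<union> e ` S) \<subseteq> FS" using rsFS fse
      by (intro cvs.span_minimal subFS) (auto simp: FS_def)
    show "FS \<subseteq> cspan (row_space A \<union> e ` S)"
    proof
      let ?V = "cspan (row_space A \<union> e ` S)"
      have eV: "e k \<in> ?V" for k
      proof (cases "k \<in> S")
        case True then show ?thesis by (intro cvs.span_base) auto
      next
        case False
        then obtain j where j: "j \<in> N" "k = len (H j)" using notS by blast
        let ?T = "{t. H j t \<noteq> 0} - {k}"
        have fT: "finite ?T" using finH[of j] by simp
        have TS: "?T \<subseteq> S" using inS[OF j(1)] j(2) by auto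
        have HjA: "H j = (\<Sum>i\<in>{i. Q j i \<noteq> 0}. cscale (Q j i) (A i))"
          using assms(4) by (simp add: fun_eq_iff sum_fun_apply mmult_def cscale_apply)
        have "H j \<in> row_space A" unfolding row_space_def HjA
          by (intro cvs.span_sum cvs.span_scale cvs.span_base) auto
        then have HV: "H j \<in> ?V" by (intro cvs.span_base) auto
        have Hs: "H j = e k + (\<Sum>s\<in>?T. cscale (H j s) (e s))"
        proof
          fix t
          have "(\<Sum>s\<in>?T. cscale (H j s) (e s)) t = (if t \<in> ?T then H j t else 0)"
            by (simp only: sum_fun_apply cscale_apply e_def) (rule sum_delta_mult[OF fT])
          then show "H j t = (e k + (\<Sum>s\<in>?T. cscale (H j s) (e s))) t"
            using one[OF j(1)] j(2) by (auto simp: e_def)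
        qed
        have ek: "e k = H j - (\<Sum>s\<in>?T. cscale (H j s) (e s))"
          using Hs[symmetric] by (simp add: eq_diff_eq)
        have sumV: "(\<Sum>s\<in>?T. cscale (H j s) (e s)) \<in> ?V"
          using TS by (intro cvs.span_sum cvs.span_scale cvs.span_base) auto
        show ?thesis unfolding ek by (rule cvs.span_diff[OF HV sumV])
      qed
      fix x assume "x \<in> FS"
      then have fx: "finite {k. x k \<noteq> 0}" by (simp add: FS_def fin_supp_def)
      have "x = (\<Sum>k\<in>{k. x k \<noteq> 0}. cscale (x k) (e k))"
      proof
        fix t
        show "x t = (\<Sum>k\<in>{k. x k \<noteq> 0}. cscale (x k) (e k)) t"
          by (simp only: sum_fun_apply cscale_apply e_def sum_delta_mult[OF fx]) auto
      qed
      also have "\<dots> \<in> ?V" by (intro cvs.span_sum cvs.span_scale eV)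
      finally show "x \<in> ?V" .
    qed
  qed
  have inje: "inj_on e S"
  proof (rule inj_onI)
    fix a b assume "e a = e b"
    then have "e a a = e b a" by simp
    then show "a = b" by (simp add: e_def split: if_splits)
  qed
  have defi: "deficiency A = card S"
    unfolding deficiency_def
  proof (rule Least_equality)
    show "\<exists>B. finite B \<and> card B = card S \<and> B \<subseteq> FS \<and> cspan (row_space A \<union> B) = FS"
      by (rule exI[of _ "e ` S"]) (use finS Sspan fse card_image[OF inje] in \<open>auto simp: FS_def\<close>)
    show "card S \<le> m" if "\<exists>B. finite B \<and> card B = m \<and> B \<subseteq> FS \<and> cspan (row_space A \<union> B) = FS" for m
      using that bound[OF finS subset_refl] by auto
  qed
  show ?thesis
  proof (intro conjI)
    show "finite S" by (rule finS)
    show "inj_on \<xi> S" using xidi by blast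
    show "\<xi> ` S \<subseteq> RNS A" using xiA by blast
    show "cindependent (\<xi> ` S)" using xidi by blast
    show "cspan (\<xi> ` S) = RNS A" by (rule spanxi)
    show "\<forall>x\<in>RNS A. x = (\<lambda>t. \<Sum>s\<in>S. x s * \<xi> s t)" using expand by blast
    show "cdim (RNS A) = deficiency A" using dimeq defi by simp
    show "deficiency A = card S" by (rule defi)
  qed
qed

end
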